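(* Let $\lambda,R_c,H,\alpha_L,\alpha_N,B,C>0$ and $0<\delta\le1$. Let $\Phi$ be a homogeneous Poisson point process on $\mathbb{R}^2$ of intensity $\lambda$, $\mathcal{D}=\{y:\|y\|\le R_c\}$, $\Phi_o=\Phi\setminus\mathcal{D}$. For $x\in\mathcal{D}$ let $r_1(x)=\min_{y\in\Phi_o}\|y-x\|$, and let $s(x)\in\{L,N\}$ be a random label, independent of $\Phi$, with $\Pr(s(x)=L)=P_L(\|x\|)$, where $P_L(r_0)=\frac{1}{1+C\exp(-B(\phi(r_0,H)-C))}$, $\phi(r_0,H)=\arctan\frac{H}{r_0}$, and $P_N=1-P_L$. Define the random sets $\mathcal{A}_1=\{x\in\mathcal{D}: r_1(x)^{\alpha_N}\le\delta(H^2+\|x\|^2)^{\alpha_{s(x)}/2}\}$, $\mathcal{A}_2=\{x\in\mathcal{D}:\delta(H^2+\|x\|^2)^{\alpha_{s(x)}/2}<r_1(x)^{\alpha_N}\le\frac1\delta(H^2+\|x\|^2)^{\alpha_{s(x)}/2}\}$, $\mathcal{A}_3=\{x\in\mathcal{D}: r_1(x)^{\alpha_N}>\frac1\delta(H^2+\|x\|^2)^{\alpha_{s(x)}/2}\}$, and the expected areas $C_{\mathcal{A}_i}=\int_{\mathcal{D}}\Pr(x\in\mathcal{A}_i)\,dx$. Then, with $A_s(r_0)=\big(\delta(H^2+r_0^2)^{\alpha_s/2}\big)^{1/\alpha_N}$ and $B_s(r_0)=\big(\tfrac1\delta(H^2+r_0^2)^{\alpha_s/2}\big)^{1/\alpha_N}$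 for $s\in\{L,N\}$, $$C_{\mathcal{A}_1}=2\pi\sum_{s\in\{L,N\}}\int_0^{R_c}P_s(r_0)F_{r_1|r_0}(A_s(r_0))r_0\,dr_0,$$ $$C_{\mathcal{A}_2}=2\pi\sum_{s\in\{L,N\}}\int_0^{R_c}P_s(r_0)\big(F_{r_1|r_0}(B_s(r_0))-F_{r_1|r_0}(A_s(r_0))\big)r_0\,dr_0,$$ $$C_{\mathcal{A}_3}=2\pi\sum_{s\in\{L,N\}}\int_0^{R_c}P_s(r_0)\big(1-F_{r_1|r_0}(B_s(r_0))\big)r_0\,dr_0,$$ where $F_{r_1|r_0}$ is the cumulative distribution function of $r_1(x)$ for any $x$ with $\|x\|=r_0$.
   Context: A UAV hovers at height $H$ above the center of the disc $\mathcal{D}$; $s(x)$ indicates whether the UAV-to-user link is line-of-sight ($L$) or not ($N$), with path-loss exponents $\alpha_L,\alpha_N$. A user at $x$ is served by its nearest ground base station only ($\mathcal{A}_1$), by both the UAV and the nearest ground base station ($\mathcal{A}_2$), or by the UAV only ($\mathcal{A}_3$). $F_{r_1|r_0}(r)$ equals $0$ for $r\le R_c-r_0$, $1-e^{-\lambda\zeta_2(r)}$ for $R_c-r_0<r<R_c+r_0$ (with $\zeta_2(r)$ the area of the disc of radius $r$ around $x$ lying outside $\mathcal{D}$), and $1-e^{-\lambda(\pi r^2-\pi R_c^2)}$ otherwise. *)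

theory Defs
  imports "HOL-Probability.Probability"
begin

definition is_PPP :: "'a measure \<Rightarrow> real \<Rightarrow> ('a \<Rightarrow> (real \<times> real) set) \<Rightarrow> bool" where
  "is_PPP M lam Phi \<longleftrightarrow>
     (\<forall>\<omega>\<in>space M. \<forall>A. bounded A \<longrightarrow> finite (Phi \<omega> \<inter> A)) \<and>
     (\<forall>A (k::nat). A \<in> sets lborel \<and> bounded A \<longrightarrow>
        {\<omega>\<in>space M. card (Phi \<omega> \<inter> A) = k} \<in> sets M \<and>
        measure M {\<omega>\<in>space M. card (Phi \<omega> \<inter> A) = k}
          = (lam * measure lborel A) ^ k / fact k * exp (- (lam * measure lborel A))) \<and>
     (\<forall>(I::nat set) A. disjoint_family_on A I \<and> (\<forall>i\<in>I. A i \<in> sets lborel \<and> bounded (A i)) \<longrightarrow>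
        prob_space.indep_vars M (\<lambda>_. count_space UNIV) (\<lambda>i \<omega>. card (Phi \<omega> \<inter> A i)) I)"

definition PPP_sigma :: "'a measure \<Rightarrow> ('a \<Rightarrow> (real \<times> real) set) \<Rightarrow> 'a set set" where
  "PPP_sigma M Phi = sigma_sets (space M)
     {{\<omega>\<in>space M. card (Phi \<omega> \<inter> A) = k} | A k. A \<in> sets lborel \<and> bounded A}"

definition r1 :: "real \<Rightarrow> (real \<times> real) set \<Rightarrow> real \<times> real \<Rightarrow> real" where
  "r1 Rc P x = infdist x {y\<in>P. norm y > Rc}"

text \<open>CDF of r1(x) for x with norm x = r0 (evaluated at x = (r0,0)).\<close>
definition F_r1 :: "'a measure \<Rightarrow> ('a \<Rightarrow> (real \<times> real) set) \<Rightarrow> real \<Rightarrow> real \<Rightarrow> real \<Rightarrow> real" where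
  "F_r1 M Phi Rc r0 r = measure M {\<omega>\<in>space M. r1 Rc (Phi \<omega>) (r0, 0) \<le> r}"

definition elev :: "real \<Rightarrow> real \<Rightarrow> real" where
  "elev r0 H = (if r0 = 0 then pi / 2 else arctan (H / r0))"

definition P_L :: "real \<Rightarrow> real \<Rightarrow> real \<Rightarrow> real \<Rightarrow> real" where
  "P_L B C H r0 = 1 / (1 + C * exp (- B * (elev r0 H - C)))"

definition P_N :: "real \<Rightarrow> real \<Rightarrow> real \<Rightarrow> real \<Rightarrow> real" where
  "P_N B C H r0 = 1 - P_L B C H r0"

text \<open>Path-loss exponent for label s (True = LoS, False = NLoS).\<close>
definition alpha_of :: "real \<Rightarrow> real \<Rightarrow> bool \<Rightarrow> real" where
  "alpha_of aL aN s = (if s then aL else aN)"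

definition A_thr :: "real \<Rightarrow> real \<Rightarrow> real \<Rightarrow> real \<Rightarrow> real \<Rightarrow> real" where
  "A_thr \<delta> H a aN r0 = (\<delta> * (H\<^sup>2 + r0\<^sup>2) powr (a / 2)) powr (1 / aN)"

definition B_thr :: "real \<Rightarrow> real \<Rightarrow> real \<Rightarrow> real \<Rightarrow> real \<Rightarrow> real" where
  "B_thr \<delta> H a aN r0 = ((1 / \<delta>) * (H\<^sup>2 + r0\<^sup>2) powr (a / 2)) powr (1 / aN)"

end

theory Submission
  imports Defs "HOL-Real_Asymp.Real_Asymp"
begin


lemma transl_emeasure:
  fixes C :: "real set" assumes "C \<in> sets borel"
  shows "emeasure lborel ((\<lambda>x. x + c) -` C) = emeasure lborel C"
proof -
  have "emeasure (distr lborel borel ((+) c)) C = emeasure lborel C"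
    by (simp add: lborel_distr_plus)
  moreover have "emeasure (distr lborel borel ((+) c)) C = emeasure lborel (((+) c) -` C)"
    using assms by (subst emeasure_distr) auto
  moreover have "((+) c) -` C = (\<lambda>x. x + c) -` C" by (auto simp: add.commute)
  ultimately show ?thesis by simp
qed

lemma shear_x:
  fixes A :: "(real \<times> real) set" assumes A: "A \<in> sets borel"
  shows "emeasure lborel ((\<lambda>(x,y). (x + a * y, y)) -` A) = emeasure lborel A"
proof -
  let ?S = "(\<lambda>(x,y). (x + a * y, y)) :: real\<times>real \<Rightarrow> real\<times>real"
  have Sm: "?S \<in> borel_measurable borel"
    unfolding borel_prod[symmetric] by measurable
  have B: "?S -` A \<in> sets borel" using measurable_sets_borel[OF Sm A] .
  have A': "A \<in> sets (lborel \<Otimes>\<^sub>M lborel)" unfolding lborel_prod using A by simp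
  have B': "?S -` A \<in> sets (lborel \<Otimes>\<^sub>M lborel)" unfolding lborel_prod using B by simp
  have "emeasure lborel (?S -` A) = emeasure (lborel \<Otimes>\<^sub>M lborel) (?S -` A)" by (simp add: lborel_prod)
  also have "\<dots> = (\<integral>\<^sup>+y. emeasure lborel ((\<lambda>x. (x, y)) -` (?S -` A)) \<partial>lborel)"
    by (rule lborel_pair.emeasure_pair_measure_alt2[OF B'])
  also have "\<dots> = (\<integral>\<^sup>+y. emeasure lborel ((\<lambda>x. (x, y)) -` A) \<partial>lborel)"
  proof (rule nn_integral_cong)
    fix y :: real
    have sec: "(\<lambda>x. (x, y)) -` A \<in> sets borel"
      by (rule measurable_sets_borel[OF _ A]) (unfold borel_prod[symmetric], measurable)
    have "(\<lambda>x. (x, y)) -` (?S -` A) = (\<lambda>x. x + a * y) -` ((\<lambda>x. (x, y)) -` A)" by auto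
    then show "emeasure lborel ((\<lambda>x. (x, y)) -` (?S -` A)) = emeasure lborel ((\<lambda>x. (x, y)) -` A)"
      using transl_emeasure[OF sec] by simp
  qed
  also have "\<dots> = emeasure (lborel \<Otimes>\<^sub>M lborel) A"
    by (rule lborel_pair.emeasure_pair_measure_alt2[OF A', symmetric])
  finally show ?thesis by (simp add: lborel_prod)
qed

lemma shear_y:
  fixes A :: "(real \<times> real) set" assumes A: "A \<in> sets borel"
  shows "emeasure lborel ((\<lambda>(x,y). (x, y + b * x)) -` A) = emeasure lborel A"
proof -
  let ?S = "(\<lambda>(x,y). (x, y + b * x)) :: real\<times>real \<Rightarrow> real\<times>real"
  have Sm: "?S \<in> borel_measurable borel"
    unfolding borel_prod[symmetric] by measurable
  have B: "?S -` A \<in> sets borel" using measurable_sets_borel[OF Sm A] .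
  have A': "A \<in> sets (lborel \<Otimes>\<^sub>M lborel)" unfolding lborel_prod using A by simp
  have B': "?S -` A \<in> sets (lborel \<Otimes>\<^sub>M lborel)" unfolding lborel_prod using B by simp
  have "emeasure lborel (?S -` A) = emeasure (lborel \<Otimes>\<^sub>M lborel) (?S -` A)" by (simp add: lborel_prod)
  also have "\<dots> = (\<integral>\<^sup>+x. emeasure lborel (Pair x -` (?S -` A)) \<partial>lborel)"
    by (rule lborel.emeasure_pair_measure_alt[OF B'])
  also have "\<dots> = (\<integral>\<^sup>+x. emeasure lborel (Pair x -` A) \<partial>lborel)"
  proof (rule nn_integral_cong)
    fix x :: real
    have sec: "Pair x -` A \<in> sets borel"
      by (rule measurable_sets_borel[OF _ A]) (unfold borel_prod[symmetric], measurable)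
    have "Pair x -` (?S -` A) = (\<lambda>y. y + b * x) -` (Pair x -` A)" by auto
    then show "emeasure lborel (Pair x -` (?S -` A)) = emeasure lborel (Pair x -` A)"
      using transl_emeasure[OF sec] by simp
  qed
  also have "\<dots> = emeasure (lborel \<Otimes>\<^sub>M lborel) A"
    by (rule lborel.emeasure_pair_measure_alt[OF A', symmetric])
  finally show ?thesis by (simp add: lborel_prod)
qed

definition rot :: "real \<Rightarrow> real \<Rightarrow> real \<times> real \<Rightarrow> real \<times> real" where
  "rot c s = (\<lambda>(x,y). (c * x - s * y, s * x + c * y))"

lemma rot_measurable[measurable]: "rot c s \<in> borel_measurable borel"
  unfolding rot_def borel_prod[symmetric] by measurable

lemma rot_emeasure1:
  fixes A :: "(real \<times> real) set" assumes A: "A \<in> sets borel"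
    and cs: "c\<^sup>2 + s\<^sup>2 = 1" and c: "c \<noteq> -1"
  shows "emeasure lborel (rot c s -` A) = emeasure lborel A"
proof -
  define a where "a = - s / (1 + c)"
  let ?X = "(\<lambda>(x,y). (x + a * y, y)) :: real\<times>real \<Rightarrow> real\<times>real"
  let ?Y = "(\<lambda>(x,y). (x, y + s * x)) :: real\<times>real \<Rightarrow> real\<times>real"
  have pc: "1 + c \<noteq> 0" using c by linarith
  have e1: "1 + a * s = c"
  proof -
    have "s\<^sup>2 = (1 - c) * (1 + c)" using cs by (simp add: algebra_simps power2_eq_square)
    then show ?thesis using pc unfolding a_def by (simp add: field_simps power2_eq_square)
  qed
  have e2: "2 * a + a * a * s = - s"
  proof -
    have "2 * a + a * a * s = a * (1 + (1 + a * s))" by (simp add: algebra_simps)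
    also have "\<dots> = a * (1 + c)" using e1 by simp
    also have "\<dots> = -s" using pc unfolding a_def by simp
    finally show ?thesis .
  qed
  have eq: "rot c s = ?X \<circ> ?Y \<circ> ?X"
  proof
    fix p :: "real \<times> real"
    obtain p1 p2 where p: "p = (p1,p2)" by (cases p)
    have "c * p1 - s * p2 = p1 + a * p2 + a * (p2 + s * (p1 + a * p2))"
    proof -
      have "p1 + a * p2 + a * (p2 + s * (p1 + a * p2)) = (1 + a * s) * p1 + (2 * a + a * a * s) * p2" by (simp add: algebra_simps)
      then show ?thesis using e1 e2 by simp
    qed
    moreover have "s * p1 + c * p2 = p2 + s * (p1 + a * p2)" by (simp add: e1[symmetric] algebra_simps)
    ultimately show "rot c s p = (?X \<circ> ?Y \<circ> ?X) p" by (simp add: rot_def p)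
  qed
  have m1: "?X -` A \<in> sets borel"
    by (rule measurable_sets_borel[OF _ A]) (unfold borel_prod[symmetric], measurable)
  have m2: "?Y -` (?X -` A) \<in> sets borel"
    by (rule measurable_sets_borel[OF _ m1]) (unfold borel_prod[symmetric], measurable)
  have "rot c s -` A = ?X -` (?Y -` (?X -` A))" by (simp add: eq vimage_comp)
  then show ?thesis using shear_x[OF m2] shear_y[OF m1] shear_x[OF A] by simp
qed

lemma rot_emeasure:
  fixes A :: "(real \<times> real) set" assumes A: "A \<in> sets borel"
    and cs: "c\<^sup>2 + s\<^sup>2 = 1"
  shows "emeasure lborel (rot c s -` A) = emeasure lborel A"
proof (cases "c = -1")
  case False then show ?thesis using rot_emeasure1[OF A cs] by simp
next
  case True
  then have s: "s = 0" using cs by (simp add: power2_eq_square)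
  have eq: "rot c s = rot 0 1 \<circ> rot 0 1" using True s by (auto simp: rot_def)
  have m1: "rot 0 1 -` A \<in> sets borel" by (rule measurable_sets_borel[OF rot_measurable A])
  show ?thesis using rot_emeasure1[OF m1, of 0 1] rot_emeasure1[OF A, of 0 1]
    by (simp add: eq vimage_comp)
qed

lemma rot_norm: "c\<^sup>2 + s\<^sup>2 = 1 \<Longrightarrow> norm (rot c s p) = norm p"
proof -
  assume cs: "c\<^sup>2 + s\<^sup>2 = 1"
  obtain a b where p: "p = (a, b)" by (cases p)
  have "(c * a - s * b)\<^sup>2 + (s * a + c * b)\<^sup>2 = (c\<^sup>2 + s\<^sup>2) * (a\<^sup>2 + b\<^sup>2)"
    by (simp add: algebra_simps power2_eq_square)
  then show ?thesis using cs by (simp add: rot_def norm_Pair p)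
qed

lemma rot_dist: "c\<^sup>2 + s\<^sup>2 = 1 \<Longrightarrow> dist (rot c s p) (rot c s q) = dist p q"
proof -
  assume cs: "c\<^sup>2 + s\<^sup>2 = 1"
  have "rot c s p - rot c s q = rot c s (p - q)"
    by (cases p; cases q) (simp add: rot_def algebra_simps)
  then show ?thesis using rot_norm[OF cs] by (simp add: dist_norm)
qed



lemma emeasure_ball2: "r \<ge> 0 \<Longrightarrow> emeasure lborel (ball (0::real\<times>real) r) = ennreal (pi * r\<^sup>2)"
  using emeasure_ball[of r "0::real\<times>real"] by (simp add: unit_ball_vol_2 power2_eq_square)

lemma polar_measure:
  "distr (lborel :: (real \<times> real) measure) borel norm = density lborel (\<lambda>r. ennreal (2 * pi * r))"
proof (rule measure_eqI_generator_eq[where E="range lessThan" and \<Omega>=UNIV and A="\<lambda>i. {..< real i}"])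
  show "Int_stable (range lessThan :: real set set)"
  proof (clarsimp simp: Int_stable_def)
    fix a b :: real
    have "{..<a} \<inter> {..<b} = {..<min a b}" by auto
    then show "{..<a} \<inter> {..<b} \<in> range lessThan" by auto
  qed
  show "range lessThan \<subseteq> Pow (UNIV :: real set)" by auto
  show "sets (distr (lborel :: (real \<times> real) measure) borel norm) = sigma_sets UNIV (range lessThan)"
    by (simp add: borel_Iio)
  show "sets (density lborel (\<lambda>r. ennreal (2 * pi * r))) = sigma_sets UNIV (range lessThan)"
    by (simp add: borel_Iio)
  show "range (\<lambda>i. {..< real i}) \<subseteq> range lessThan" by auto
  show "(\<Union>i. {..< real i}) = UNIV" by (auto intro: reals_Archimedean2)
  have key: "emeasure (distr (lborel :: (real \<times> real) measure) borel norm) {..<a} = ennreal (pi * (max 0 a)\<^sup>2)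
     \<and> emeasure (density lborel (\<lambda>r. ennreal (2 * pi * r))) {..<a} = ennreal (pi * (max 0 a)\<^sup>2)" for a :: real
  proof
    have "norm -` {..<a} = ball (0::real\<times>real) (max 0 a)" using norm_ge_zero by (auto simp: dist_0_norm max_def) (metis le_less_trans less_le_not_le norm_ge_zero)
    then show "emeasure (distr (lborel :: (real \<times> real) measure) borel norm) {..<a} = ennreal (pi * (max 0 a)\<^sup>2)"
      by (simp add: emeasure_distr emeasure_ball2)
    have "emeasure (density lborel (\<lambda>r. ennreal (2 * pi * r))) {..<a}
        = (\<integral>\<^sup>+r. ennreal (2 * pi * r) * indicator {..<a} r \<partial>lborel)"
      by (simp add: emeasure_density)
    also have "\<dots> = (\<integral>\<^sup>+r. ennreal (2 * pi * r) * indicator {0..max 0 a} r \<partial>lborel)"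
    proof (rule nn_integral_cong_AE)
      show "AE r in lborel. ennreal (2 * pi * r) * indicator {..<a} r = ennreal (2 * pi * r) * indicator {0..max 0 a} r"
        using AE_lborel_singleton[of a] AE_lborel_singleton[of 0]
        by eventually_elim (auto simp: indicator_def ennreal_eq_0_iff mult_le_0_iff)
    qed
    also have "\<dots> = ennreal (pi * (max 0 a)\<^sup>2 - pi * 0\<^sup>2)"
      by (rule nn_integral_FTC_Icc[where F="\<lambda>r. pi * r\<^sup>2"])
         (auto intro!: derivative_eq_intros simp: field_simps)
    finally show "emeasure (density lborel (\<lambda>r. ennreal (2 * pi * r))) {..<a} = ennreal (pi * (max 0 a)\<^sup>2)"
      by simp
  qed
  show "emeasure (distr (lborel :: (real \<times> real) measure) borel norm) X = emeasure (density lborel (\<lambda>r. ennreal (2 * pi * r))) X"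
    if "X \<in> range lessThan" for X using that key by auto
  show "emeasure (distr (lborel :: (real \<times> real) measure) borel norm) {..< real i} \<noteq> \<infinity>" for i
    using key by simp
qed

lemma polar_measure':
  "distr (lborel :: (real \<times> real) measure) borel norm = density lborel (\<lambda>r. ennreal (2 * pi * max 0 r))"
proof -
  have "(\<lambda>r. ennreal (2 * pi * r)) = (\<lambda>r. ennreal (2 * pi * max 0 r))"
    by (rule ext) (auto simp: max_def ennreal_neg mult_le_0_iff)
  then show ?thesis using polar_measure by simp
qed

lemma polar_integral:
  fixes g :: "real \<Rightarrow> real"
  assumes g[measurable]: "g \<in> borel_measurable borel"
  shows "(LINT x:{x::real\<times>real. norm x \<le> Rc}|lborel. g (norm x)) = 2 * pi * (LINT r:{0..Rc}|lborel. g r * r)"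
proof -
  define h where "h r = indicator {..Rc} r * g r" for r :: real
  have hm[measurable]: "h \<in> borel_measurable borel" unfolding h_def by measurable
  have "(LINT x:{x::real\<times>real. norm x \<le> Rc}|lborel. g (norm x)) = integral\<^sup>L (lborel :: (real \<times> real) measure) (\<lambda>x. h (norm x))"
    unfolding set_lebesgue_integral_def h_def by (simp add: indicator_def)
  also have "\<dots> = integral\<^sup>L (distr (lborel :: (real \<times> real) measure) borel norm) h"
    by (rule integral_distr[symmetric]) auto
  also have "\<dots> = integral\<^sup>L (density lborel (\<lambda>r. ennreal (2 * pi * max 0 r))) h"
    by (simp add: polar_measure')
  also have "\<dots> = integral\<^sup>L lborel (\<lambda>r. (2 * pi * max 0 r) *\<^sub>R h r)"
    by (rule integral_density) auto
  also have "\<dots> = integral\<^sup>L lborel (\<lambda>r. 2 * pi * (indicator {0..Rc} r *\<^sub>R (g r * r)))"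
    by (rule Bochner_Integration.integral_cong) (auto simp: h_def indicator_def max_def)
  also have "\<dots> = 2 * pi * (LINT r:{0..Rc}|lborel. g r * r)"
    unfolding set_lebesgue_integral_def by simp
  finally show ?thesis .
qed



definition Kset :: "real \<Rightarrow> real \<times> real \<Rightarrow> real \<Rightarrow> (real \<times> real) set" where
  "Kset Rc x a = {y. dist x y \<le> a \<and> Rc < norm y}"

lemma Kset_bounded: "bounded (Kset Rc x a)"
  unfolding Kset_def by (rule bounded_subset[OF bounded_cball[of x a]]) (auto simp: dist_commute)

lemma Kset_borel: "Kset Rc x a \<in> sets lborel"
proof -
  have "Kset Rc x a = {y \<in> space borel. dist x y \<le> a \<and> Rc < norm y}" by (simp add: Kset_def)
  also have "\<dots> \<in> sets borel" by measurable
  finally show ?thesis by simp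
qed

lemma locfin_closed:
  fixes P :: "(real \<times> real) set"
  assumes "\<forall>A. bounded A \<longrightarrow> finite (P \<inter> A)"
  shows "closed (S \<inter> P)"
proof -
  have "\<not> z islimpt (S \<inter> P)" for z
  proof -
    have "finite (P \<inter> ball z 1)" using assms by auto
    then have "finite (S \<inter> P \<inter> ball z 1)" by (rule rev_finite_subset) auto
    then show ?thesis unfolding islimpt_eq_infinite_ball by (meson zero_less_one)
  qed
  then show ?thesis by (simp add: closed_limpt)
qed

lemma r1_le_iff:
  fixes P :: "(real \<times> real) set"
  assumes fin: "\<forall>A. bounded A \<longrightarrow> finite (P \<inter> A)"
  shows "r1 Rc P x \<le> a \<longleftrightarrow> (P \<inter> Kset Rc x a \<noteq> {} \<or> {y\<in>P. Rc < norm y} = {}) \<and> 0 \<le> a"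
proof -
  let ?S = "{y\<in>P. Rc < norm y}"
  have eqS: "?S = {y. Rc < norm y} \<inter> P" by auto
  show ?thesis
  proof (cases "?S = {}")
    case True
    then have "P \<inter> Kset Rc x a = {}" by (auto simp: Kset_def)
    moreover have "r1 Rc P x = 0" unfolding r1_def True infdist_def by simp
    ultimately show ?thesis using True by simp
  next
    case False
    have cl: "closed ?S" unfolding eqS by (rule locfin_closed[OF fin])
    obtain y where y: "y \<in> ?S" "infdist x ?S = dist x y"
      using infdist_attains_inf[OF cl False] by blast
    show ?thesis
    proof
      assume le: "r1 Rc P x \<le> a"
      then have "y \<in> P \<inter> Kset Rc x a" using y by (auto simp: r1_def Kset_def)
      moreover have "0 \<le> a" using le infdist_nonneg[of x ?S] by (simp add: r1_def)
      ultimately show "(P \<inter> Kset Rc x a \<noteq> {} \<or> ?S = {}) \<and> 0 \<le> a" by blast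
    next
      assume h: "(P \<inter> Kset Rc x a \<noteq> {} \<or> ?S = {}) \<and> 0 \<le> a"
      with False obtain z where z: "z \<in> P" "dist x z \<le> a" "Rc < norm z" by (auto simp: Kset_def)
      then have "infdist x ?S \<le> dist x z" by (intro infdist_le) auto
      then show "r1 Rc P x \<le> a" using z by (simp add: r1_def)
    qed
  qed
qed

locale ppp_ctx = prob_space M for M :: "'a measure" +
  fixes lam Rc :: real and Phi :: "'a \<Rightarrow> (real \<times> real) set"
  assumes lam: "lam > 0" and Rc: "Rc > 0" and ppp: "is_PPP M lam Phi"
begin

lemma fin: "\<omega> \<in> space M \<Longrightarrow> bounded A \<Longrightarrow> finite (Phi \<omega> \<inter> A)"
  using ppp unfolding is_PPP_def by blast

lemma cnt_sets: "A \<in> sets lborel \<Longrightarrow> bounded A \<Longrightarrow> {\<omega>\<in>space M. card (Phi \<omega> \<inter> A) = k} \<in> sets M"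
  using ppp unfolding is_PPP_def by blast

lemma cnt_prob: "A \<in> sets lborel \<Longrightarrow> bounded A \<Longrightarrow>
   prob {\<omega>\<in>space M. card (Phi \<omega> \<inter> A) = k} = (lam * measure lborel A) ^ k / fact k * exp (- (lam * measure lborel A))"
  using ppp unfolding is_PPP_def by blast

lemma cnt_sigma: "A \<in> sets lborel \<Longrightarrow> bounded A \<Longrightarrow> {\<omega>\<in>space M. card (Phi \<omega> \<inter> A) = k} \<in> PPP_sigma M Phi"
  unfolding PPP_sigma_def by (rule sigma_sets.Basic) blast

lemma gen_pow: "{{\<omega>\<in>space M. card (Phi \<omega> \<inter> A) = k} | A k. A \<in> sets lborel \<and> bounded A} \<subseteq> Pow (space M)"
  by auto

lemma PPP_sigma_sets: "PPP_sigma M Phi \<subseteq> events"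
  unfolding PPP_sigma_def
  by (rule sets.sigma_sets_subset) (auto intro: cnt_sets)

definition Ev :: "real \<times> real \<Rightarrow> real \<Rightarrow> 'a set" where
  "Ev x a = {\<omega>\<in>space M. r1 Rc (Phi \<omega>) x \<le> a}"

definition Zs :: "'a set" where
  "Zs = {\<omega>\<in>space M. {y\<in>Phi \<omega>. Rc < norm y} = {}}"

definition Kn :: "nat \<Rightarrow> (real \<times> real) set" where
  "Kn n = {y. norm y \<le> real n \<and> Rc < norm y}"

lemma Kn_borel: "Kn n \<in> sets lborel"
proof -
  have "Kn n = {y \<in> space borel. norm y \<le> real n \<and> Rc < norm y}" by (simp add: Kn_def)
  also have "\<dots> \<in> sets borel" by measurable
  finally show ?thesis by simp
qed

lemma Kn_bounded: "bounded (Kn n)"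
  unfolding Kn_def by (rule bounded_subset[OF bounded_cball[of 0 "real n"]]) auto

lemma Zs_eq: "Zs = (\<Inter>n. {\<omega>\<in>space M. card (Phi \<omega> \<inter> Kn n) = 0})"
proof -
  have "{y\<in>Phi \<omega>. Rc < norm y} = {} \<longleftrightarrow> (\<forall>n. card (Phi \<omega> \<inter> Kn n) = 0)" if "\<omega> \<in> space M" for \<omega>
  proof
    assume "{y\<in>Phi \<omega>. Rc < norm y} = {}"
    then have "\<forall>n. Phi \<omega> \<inter> Kn n = {}" by (auto simp: Kn_def)
    then show "\<forall>n. card (Phi \<omega> \<inter> Kn n) = 0" by simp
  next
    assume h: "\<forall>n. card (Phi \<omega> \<inter> Kn n) = 0"
    show "{y\<in>Phi \<omega>. Rc < norm y} = {}"
    proof (rule ccontr)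
      assume "{y\<in>Phi \<omega>. Rc < norm y} \<noteq> {}"
      then obtain y where y: "y \<in> Phi \<omega>" "Rc < norm y" by auto
      obtain n where n: "norm y \<le> real n" using real_arch_simple by blast
      have "finite (Phi \<omega> \<inter> Kn n)" using fin[OF that Kn_bounded] .
      moreover have "y \<in> Phi \<omega> \<inter> Kn n" using y n by (auto simp: Kn_def)
      ultimately have "card (Phi \<omega> \<inter> Kn n) \<noteq> 0" by (auto simp: card_eq_0_iff)
      moreover from h have "card (Phi \<omega> \<inter> Kn n) = 0" by (rule spec)
      ultimately show False by blast
    qed
  qed
  then show ?thesis unfolding Zs_def by auto
qed

lemma Zs_sigma: "Zs \<in> PPP_sigma M Phi"
  unfolding Zs_eq PPP_sigma_def
  by (rule sigma_sets_Inter[OF gen_pow]) (rule sigma_sets.Basic, blast intro: Kn_borel Kn_bounded)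

lemma Zs_sets: "Zs \<in> events" using Zs_sigma PPP_sigma_sets by blast

lemma measure_cball0: "r \<ge> 0 \<Longrightarrow> measure lborel (cball (0::real\<times>real) r) = pi * r\<^sup>2"
  using emeasure_cball[of r "0::real\<times>real"] by (simp add: measure_def unit_ball_vol_2 power2_eq_square)

lemma measure_Kn: "Rc \<le> real n \<Longrightarrow> measure lborel (Kn n) = pi * (real n)\<^sup>2 - pi * Rc\<^sup>2"
proof -
  assume n: "Rc \<le> real n"
  have "Kn n = cball 0 (real n) - cball 0 Rc" by (auto simp: Kn_def)
  moreover have "measure lborel (cball (0::real\<times>real) (real n) - cball 0 Rc)
      = measure lborel (cball (0::real\<times>real) (real n)) - measure lborel (cball (0::real\<times>real) Rc)"
    using n by (intro measure_Diff) (auto simp: emeasure_cball)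
  ultimately show ?thesis using n Rc by (simp add: measure_cball0)
qed

lemma prob_Zs: "prob Zs = 0"
proof -
  have le: "prob Zs \<le> exp (- (lam * (pi * (real n)\<^sup>2 - pi * Rc\<^sup>2)))" if "Rc \<le> real n" for n
  proof -
    have "prob Zs \<le> prob {\<omega>\<in>space M. card (Phi \<omega> \<inter> Kn n) = 0}"
      using cnt_sets[OF Kn_borel Kn_bounded] unfolding Zs_eq by (intro finite_measure_mono) auto
    also have "\<dots> = exp (- (lam * measure lborel (Kn n)))"
      using cnt_prob[OF Kn_borel Kn_bounded, where k=0] by simp
    finally show ?thesis using measure_Kn[OF that] by simp
  qed
  have lim: "(\<lambda>n. exp (- (lam * (pi * (real n)\<^sup>2 - pi * Rc\<^sup>2)))) \<longlonglongrightarrow> 0"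
    using lam by real_asymp
  have "prob Zs \<le> 0"
  proof (rule LIMSEQ_le_const[OF lim])
    obtain N where "Rc \<le> real N" using real_arch_simple by blast
    then show "\<exists>N. \<forall>n\<ge>N. prob Zs \<le> exp (- (lam * (pi * (real n)\<^sup>2 - pi * Rc\<^sup>2)))"
      by (intro exI[of _ N]) (auto intro!: le)
  qed
  then show ?thesis using measure_nonneg[of M Zs] by linarith
qed

lemma card_ne0_iff: "\<omega> \<in> space M \<Longrightarrow> card (Phi \<omega> \<inter> Kset Rc x a) \<noteq> 0 \<longleftrightarrow> Phi \<omega> \<inter> Kset Rc x a \<noteq> {}"
  using fin[OF _ Kset_bounded] by auto

lemma Ev_eq: "0 \<le> a \<Longrightarrow> Ev x a = (space M - {\<omega>\<in>space M. card (Phi \<omega> \<inter> Kset Rc x a) = 0}) \<union> Zs"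
proof -
  assume a: "0 \<le> a"
  have "r1 Rc (Phi \<omega>) x \<le> a \<longleftrightarrow> card (Phi \<omega> \<inter> Kset Rc x a) \<noteq> 0 \<or> {y\<in>Phi \<omega>. Rc < norm y} = {}"
    if "\<omega> \<in> space M" for \<omega>
    using r1_le_iff[of "Phi \<omega>" Rc x a] fin[OF that] card_ne0_iff[OF that] a by blast
  then show ?thesis unfolding Ev_def Zs_def by auto
qed

lemma Ev_disj: "(space M - {\<omega>\<in>space M. card (Phi \<omega> \<inter> Kset Rc x a) = 0}) \<inter> Zs = {}"
proof -
  have "Phi \<omega> \<inter> Kset Rc x a = {}" if "\<omega> \<in> Zs" for \<omega>
    using that unfolding Zs_def Kset_def by auto
  then show ?thesis by force
qed

lemma Ev_sigma: "0 \<le> a \<Longrightarrow> Ev x a \<in> PPP_sigma M Phi"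
proof -
  assume a: "0 \<le> a"
  have "space M - {\<omega>\<in>space M. card (Phi \<omega> \<inter> Kset Rc x a) = 0} \<in> PPP_sigma M Phi"
    unfolding PPP_sigma_def
    by (rule sigma_sets.Compl) (rule cnt_sigma[OF Kset_borel Kset_bounded, unfolded PPP_sigma_def])
  then show ?thesis unfolding Ev_eq[OF a] PPP_sigma_def using Zs_sigma[unfolded PPP_sigma_def]
    by (rule sigma_sets_Un)
qed

lemma Ev_sets: "0 \<le> a \<Longrightarrow> Ev x a \<in> events"
  using Ev_sigma PPP_sigma_sets by blast

lemma prob_Ev: "0 \<le> a \<Longrightarrow> prob (Ev x a) = 1 - exp (- (lam * measure lborel (Kset Rc x a)))"
proof -
  assume a: "0 \<le> a"
  let ?C = "{\<omega>\<in>space M. card (Phi \<omega> \<inter> Kset Rc x a) = 0}"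
  have C: "?C \<in> events" by (rule cnt_sets[OF Kset_borel Kset_bounded])
  have "prob (Ev x a) = prob (space M - ?C) + prob Zs"
    unfolding Ev_eq[OF a] using C Zs_sets Ev_disj by (intro finite_measure_Union) auto
  also have "\<dots> = 1 - prob ?C" using prob_Zs C by (simp add: prob_compl)
  also have "prob ?C = exp (- (lam * measure lborel (Kset Rc x a)))"
    using cnt_prob[OF Kset_borel Kset_bounded, where k=0] by simp
  finally show ?thesis .
qed

end

lemma Kset_rot: "measure lborel (Kset Rc x a) = measure lborel (Kset Rc (norm x, 0) a)"
proof (cases "x = 0")
  case True then show ?thesis by (simp add: zero_prod_def)
next
  case False
  define c where "c = fst x / norm x"
  define s where "s = snd x / norm x"
  have nx: "norm x > 0" using False by simp
  have cs: "c\<^sup>2 + s\<^sup>2 = 1"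
  proof -
    have "(norm x)\<^sup>2 = (fst x)\<^sup>2 + (snd x)\<^sup>2" by (cases x) (simp add: norm_Pair)
    moreover have "c\<^sup>2 + s\<^sup>2 = ((fst x)\<^sup>2 + (snd x)\<^sup>2) / (norm x)\<^sup>2"
      unfolding c_def s_def by (simp add: power_divide add_divide_distrib)
    ultimately show ?thesis using nx by (cases x) (auto simp: zero_prod_def)
  qed
  have rx: "rot c s (norm x, 0) = x"
    using nx unfolding rot_def c_def s_def by (cases x) simp
  have eq: "Kset Rc (norm x, 0) a = rot c s -` Kset Rc x a"
  proof -
    have "dist x (rot c s y) = dist (norm x, 0) y" for y
      using rot_dist[OF cs, of "(norm x, 0)" y] rx by simp
    then show ?thesis unfolding Kset_def using rot_norm[OF cs] by auto
  qed
  have "emeasure lborel (rot c s -` Kset Rc x a) = emeasure lborel (Kset Rc x a)"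
    using rot_emeasure[OF _ cs] Kset_borel by simp
  then show ?thesis unfolding eq measure_def by simp
qed

context ppp_ctx begin

lemma F_eq: "0 \<le> a \<Longrightarrow> F_r1 M Phi Rc (norm x) a = prob (Ev x a)"
proof -
  assume a: "0 \<le> a"
  have "F_r1 M Phi Rc (norm x) a = prob (Ev (norm x, 0) a)" unfolding F_r1_def Ev_def by simp
  also have "\<dots> = prob (Ev x a)" using a by (simp add: prob_Ev Kset_rot[of Rc x a])
  finally show ?thesis .
qed

lemma F_eq': "0 \<le> r \<Longrightarrow> 0 \<le> a \<Longrightarrow> F_r1 M Phi Rc r a = 1 - exp (- (lam * measure lborel (Kset Rc (r, 0) a)))"
  using F_eq[of a "(r,0)"] prob_Ev[of a "(r,0)"] by simp

end



lemma powr_le_iff_root: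
  fixes r T p :: real
  assumes r: "0 \<le> r" and T: "0 < T" and p: "0 < p"
  shows "r powr p \<le> T \<longleftrightarrow> r \<le> T powr (1 / p)"
proof
  assume h: "r powr p \<le> T"
  have "(r powr p) powr (1 / p) \<le> T powr (1 / p)"
    using h p by (intro powr_mono2) auto
  moreover have "(r powr p) powr (1 / p) = r"
    using r p by (simp add: powr_powr)
  ultimately show "r \<le> T powr (1 / p)" by simp
next
  assume h: "r \<le> T powr (1 / p)"
  have "r powr p \<le> (T powr (1 / p)) powr p"
    using h p r by (intro powr_mono2) auto
  moreover have "(T powr (1 / p)) powr p = T"
    using T p by (simp add: powr_powr)
  ultimately show "r powr p \<le> T" by simp
qed

lemma P_L_bounds: "C > 0 \<Longrightarrow> 0 \<le> P_L B C H r \<and> P_L B C H r \<le> 1"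
  unfolding P_L_def by (auto simp: field_simps add_pos_nonneg)

lemma P_L_meas[measurable]: "P_L B C H \<in> borel_measurable borel"
  unfolding P_L_def[abs_def] elev_def by measurable

lemma P_N_meas[measurable]: "P_N B C H \<in> borel_measurable borel"
  unfolding P_N_def[abs_def] by measurable

definition Gf :: "real \<Rightarrow> real \<Rightarrow> (real \<Rightarrow> real) \<Rightarrow> real \<Rightarrow> real" where
  "Gf lam Rc a r = 1 - exp (- (lam * measure lborel (Kset Rc (r, 0) (a r))))"

lemma Kset_meas:
  assumes a[measurable]: "a \<in> borel_measurable borel"
  shows "(\<lambda>r. measure lborel (Kset Rc (r, 0) (a r))) \<in> borel_measurable borel"
proof -
  define Q where "Q = {p \<in> space (borel \<Otimes>\<^sub>M (borel :: (real\<times>real) measure)).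
      dist (fst p, 0::real) (snd p) \<le> a (fst p) \<and> Rc < norm (snd p)}"
  have Q: "Q \<in> sets (borel \<Otimes>\<^sub>M (lborel :: (real\<times>real) measure))"
  proof -
    have "Q \<in> sets (borel \<Otimes>\<^sub>M (borel :: (real\<times>real) measure))" unfolding Q_def by measurable
    then show ?thesis by (simp cong: sets_pair_measure_cong)
  qed
  have "(\<lambda>r. emeasure lborel (Pair r -` Q)) \<in> borel_measurable borel"
    by (rule lborel.measurable_emeasure_Pair[OF Q])
  moreover have "Pair r -` Q = Kset Rc (r, 0) (a r)" for r
    unfolding Q_def Kset_def by (auto simp: space_pair_measure)
  ultimately have "(\<lambda>r. emeasure lborel (Kset Rc (r, 0) (a r))) \<in> borel_measurable borel" by simp
  then show ?thesis unfolding measure_def by measurable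
qed

lemma Gf_meas[measurable]:
  assumes a[measurable]: "a \<in> borel_measurable borel"
  shows "Gf lam Rc a \<in> borel_measurable borel"
  unfolding Gf_def[abs_def] using Kset_meas[OF a, of Rc] by measurable

lemma Gf_bounds: "0 \<le> lam \<Longrightarrow> 0 \<le> Gf lam Rc a r \<and> Gf lam Rc a r \<le> 1"
  unfolding Gf_def by (auto simp: measure_nonneg)

lemma set_integrable_Icc_bounded:
  fixes f :: "real \<Rightarrow> real"
  assumes f[measurable]: "f \<in> borel_measurable borel" and b: "\<And>r. r \<in> {0..Rc} \<Longrightarrow> \<bar>f r\<bar> \<le> K"
  shows "set_integrable lborel {0..Rc} f"
proof (rule set_integrable_bound[where f="\<lambda>_. K"])
  show "set_integrable lborel {0..Rc} (\<lambda>_. K)"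
    by (rule borel_integrable_atLeastAtMost') auto
  show "set_borel_measurable lborel {0..Rc} f"
    unfolding set_borel_measurable_def by measurable
  show "AE x in lborel. x \<in> {0..Rc} \<longrightarrow> norm (f x) \<le> norm K"
    using b by (auto intro!: always_eventually) (smt (verit) abs_ge_zero)
qed

lemma bound3: "\<bar>p\<bar> \<le> 1 \<Longrightarrow> \<bar>q\<bar> \<le> 2 \<Longrightarrow> \<bar>r\<bar> \<le> R \<Longrightarrow> \<bar>p * q * (r::real)\<bar> \<le> 2 * R"
proof -
  assume a: "\<bar>p\<bar> \<le> 1" "\<bar>q\<bar> \<le> 2" "\<bar>r\<bar> \<le> R"
  have "\<bar>p * q\<bar> \<le> 1 * 2" unfolding abs_mult by (rule mult_mono) (use a in auto)
  then have "\<bar>p * q\<bar> * \<bar>r\<bar> \<le> 2 * R" using a by (intro mult_mono) auto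
  then show ?thesis by (simp add: abs_mult)
qed



lemma disc_sets: "{x::real\<times>real. norm x \<le> Rc} \<in> sets lborel"
proof -
  have "{x::real\<times>real. norm x \<le> Rc} = {x \<in> space borel. norm x \<le> Rc}" by simp
  also have "\<dots> \<in> sets borel" by measurable
  finally show ?thesis by simp
qed

lemma integral_combine:
  fixes f :: "real \<times> real \<Rightarrow> real" and ua ub va vb :: "real \<Rightarrow> real"
  assumes C: "C > 0"
    and f: "\<And>x. norm x \<le> Rc \<Longrightarrow> f x = P_L B C H (norm x) * ua (norm x) + P_N B C H (norm x) * ub (norm x)"
    and m1[measurable]: "ua \<in> borel_measurable borel" and m2[measurable]: "ub \<in> borel_measurable borel"
    and b1: "\<And>r. r \<in> {0..Rc} \<Longrightarrow> \<bar>ua r\<bar> \<le> 2" and b2: "\<And>r. r \<in> {0..Rc} \<Longrightarrow> \<bar>ub r\<bar> \<le> 2"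
    and e1: "\<And>r. r \<in> {0..Rc} \<Longrightarrow> ua r = va r" and e2: "\<And>r. r \<in> {0..Rc} \<Longrightarrow> ub r = vb r"
  shows "(LINT x:{x. norm x \<le> Rc}|lborel. f x)
    = 2 * pi * ((LINT r:{0..Rc}|lborel. P_L B C H r * va r * r) + (LINT r:{0..Rc}|lborel. P_N B C H r * vb r * r))"
proof -
  define h where "h r = P_L B C H r * ua r + P_N B C H r * ub r" for r
  have hm[measurable]: "h \<in> borel_measurable borel" unfolding h_def[abs_def] by measurable
  have pl: "\<bar>P_L B C H r\<bar> \<le> 1" for r using P_L_bounds[OF C, of B H r] by auto
  have pn: "\<bar>P_N B C H r\<bar> \<le> 1" for r using P_L_bounds[OF C, of B H r] by (auto simp: P_N_def)
  have i1: "set_integrable lborel {0..Rc} (\<lambda>r. P_L B C H r * ua r * r)"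
    by (rule set_integrable_Icc_bounded[where K="2 * Rc"]) (auto intro!: bound3 pl b1)
  have i2: "set_integrable lborel {0..Rc} (\<lambda>r. P_N B C H r * ub r * r)"
    by (rule set_integrable_Icc_bounded[where K="2 * Rc"]) (auto intro!: bound3 pn b2)
  have "(LINT x:{x. norm x \<le> Rc}|lborel. f x) = (LINT x:{x::real\<times>real. norm x \<le> Rc}|lborel. h (norm x))"
    by (rule set_lebesgue_integral_cong[OF disc_sets]) (auto simp: f h_def)
  also have "\<dots> = 2 * pi * (LINT r:{0..Rc}|lborel. h r * r)"
    by (rule polar_integral[OF hm])
  also have "(LINT r:{0..Rc}|lborel. h r * r) = (LINT r:{0..Rc}|lborel. P_L B C H r * ua r * r + P_N B C H r * ub r * r)"
    by (rule set_lebesgue_integral_cong) (auto simp: h_def algebra_simps)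
  also have "\<dots> = (LINT r:{0..Rc}|lborel. P_L B C H r * ua r * r) + (LINT r:{0..Rc}|lborel. P_N B C H r * ub r * r)"
    by (rule set_integral_add(2)[OF i1 i2])
  also have "(LINT r:{0..Rc}|lborel. P_L B C H r * ua r * r) = (LINT r:{0..Rc}|lborel. P_L B C H r * va r * r)"
    by (rule set_lebesgue_integral_cong) (auto simp: e1)
  also have "(LINT r:{0..Rc}|lborel. P_N B C H r * ub r * r) = (LINT r:{0..Rc}|lborel. P_N B C H r * vb r * r)"
    by (rule set_lebesgue_integral_cong) (auto simp: e2)
  finally show ?thesis .
qed

lemma thr_iff:
  assumes c: "0 < c" and aN: "0 < aN" and H: "0 < H"
  shows "r1 Rc P x powr aN \<le> c * (H\<^sup>2 + (norm x)\<^sup>2) powr (a / 2) \<longleftrightarrow>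
         r1 Rc P x \<le> (c * (H\<^sup>2 + (norm x)\<^sup>2) powr (a / 2)) powr (1 / aN)"
proof (rule powr_le_iff_root)
  show "0 \<le> r1 Rc P x" unfolding r1_def by (rule infdist_nonneg)
  have "0 < H\<^sup>2 + (norm x)\<^sup>2" using H by (simp add: add_pos_nonneg)
  then show "0 < c * (H\<^sup>2 + (norm x)\<^sup>2) powr (a / 2)" using c by (intro mult_pos_pos) auto
qed (rule aN)

lemma thr_mono:
  assumes d: "0 < \<delta>" "\<delta> \<le> 1" and aN: "0 < aN"
  shows "A_thr \<delta> H a aN r \<le> B_thr \<delta> H a aN r"
  unfolding A_thr_def B_thr_def
proof (rule powr_mono2)
  have "\<delta> \<le> 1 / \<delta>" using d by (simp add: field_simps) (metis mult_le_one less_imp_le)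
  then show "\<delta> * (H\<^sup>2 + r\<^sup>2) powr (a / 2) \<le> 1 / \<delta> * (H\<^sup>2 + r\<^sup>2) powr (a / 2)"
    by (intro mult_right_mono) auto
qed (use d aN in auto)



locale main_ctx = ppp_ctx M lam Rc Phi for M :: "'a measure" and lam Rc Phi +
  fixes s :: "'a \<Rightarrow> real \<times> real \<Rightarrow> bool" and H aL aN B C \<delta> :: real
  assumes H: "H > 0" and aL: "aL > 0" and aN: "aN > 0" and C: "C > 0"
    and d0: "0 < \<delta>" and d1: "\<delta> \<le> 1"
    and sP: "\<forall>x. norm x \<le> Rc \<longrightarrow> {\<omega>\<in>space M. s \<omega> x} \<in> sets M \<and>
            measure M {\<omega>\<in>space M. s \<omega> x} = P_L B C H (norm x)"
    and ind: "\<forall>x. norm x \<le> Rc \<longrightarrow>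
            indep_set (sigma_sets (space M) {{\<omega>\<in>space M. s \<omega> x}}) (PPP_sigma M Phi)"
begin

definition SX :: "real \<times> real \<Rightarrow> 'a set" where "SX x = {\<omega>\<in>space M. s \<omega> x}"

lemma SX_sets: "norm x \<le> Rc \<Longrightarrow> SX x \<in> events" using sP unfolding SX_def by blast
lemma SX_prob: "norm x \<le> Rc \<Longrightarrow> prob (SX x) = P_L B C H (norm x)" using sP unfolding SX_def by blast

lemma pS: "norm x \<le> Rc \<Longrightarrow> 0 \<le> a \<Longrightarrow> prob (SX x \<inter> Ev x a) = P_L B C H (norm x) * F_r1 M Phi Rc (norm x) a"
proof -
  assume nx: "norm x \<le> Rc" and a: "0 \<le> a"
  have sx: "SX x \<in> sigma_sets (space M) {{\<omega>\<in>space M. s \<omega> x}}" unfolding SX_def by (rule sigma_sets.Basic) simp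
  have "prob (SX x \<inter> Ev x a) = prob (SX x) * prob (Ev x a)"
    by (rule indep_setD[OF ind[rule_format, OF nx] sx Ev_sigma[OF a]])
  then show ?thesis using SX_prob[OF nx] F_eq[OF a] by simp
qed

lemma pN: "norm x \<le> Rc \<Longrightarrow> 0 \<le> a \<Longrightarrow> prob ((space M - SX x) \<inter> Ev x a) = P_N B C H (norm x) * F_r1 M Phi Rc (norm x) a"
proof -
  assume nx: "norm x \<le> Rc" and a: "0 \<le> a"
  have sx: "space M - SX x \<in> sigma_sets (space M) {{\<omega>\<in>space M. s \<omega> x}}" unfolding SX_def
    by (rule sigma_sets.Compl) (rule sigma_sets.Basic, simp)
  have "prob ((space M - SX x) \<inter> Ev x a) = prob (space M - SX x) * prob (Ev x a)"
    by (rule indep_setD[OF ind[rule_format, OF nx] sx Ev_sigma[OF a]])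
  moreover have "prob (space M - SX x) = P_N B C H (norm x)"
    using SX_prob[OF nx] SX_sets[OF nx] by (simp add: prob_compl P_N_def)
  ultimately show ?thesis using F_eq[OF a] by simp
qed

abbreviation "AT a x \<equiv> A_thr \<delta> H a aN (norm x)"
abbreviation "BT a x \<equiv> B_thr \<delta> H a aN (norm x)"

lemma Ev_mono: "a \<le> b \<Longrightarrow> Ev x a \<subseteq> Ev x b" unfolding Ev_def by auto

lemma thrA: "r1 Rc P x powr aN \<le> \<delta> * (H\<^sup>2 + (norm x)\<^sup>2) powr (a / 2) \<longleftrightarrow> r1 Rc P x \<le> AT a x"
  unfolding A_thr_def using thr_iff[OF d0 aN H] by simp

lemma thrB: "r1 Rc P x powr aN \<le> (1 / \<delta>) * (H\<^sup>2 + (norm x)\<^sup>2) powr (a / 2) \<longleftrightarrow> r1 Rc P x \<le> BT a x"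
  unfolding B_thr_def using thr_iff[of "1 / \<delta>", OF _ aN H] d0 by simp

lemma ev1: "{\<omega>\<in>space M. r1 Rc (Phi \<omega>) x powr aN \<le> \<delta> * (H\<^sup>2 + (norm x)\<^sup>2) powr (alpha_of aL aN (s \<omega> x) / 2)}
  = (SX x \<inter> Ev x (AT aL x)) \<union> ((space M - SX x) \<inter> Ev x (AT aN x))"
  unfolding SX_def Ev_def alpha_of_def thrA by auto

lemma ev2: "{\<omega>\<in>space M. \<delta> * (H\<^sup>2 + (norm x)\<^sup>2) powr (alpha_of aL aN (s \<omega> x) / 2) < r1 Rc (Phi \<omega>) x powr aN \<and>
        r1 Rc (Phi \<omega>) x powr aN \<le> (1 / \<delta>) * (H\<^sup>2 + (norm x)\<^sup>2) powr (alpha_of aL aN (s \<omega> x) / 2)}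
  = (SX x \<inter> (Ev x (BT aL x) - Ev x (AT aL x))) \<union> ((space M - SX x) \<inter> (Ev x (BT aN x) - Ev x (AT aN x)))"
  unfolding SX_def Ev_def alpha_of_def not_le[symmetric] thrA thrB by auto

lemma ev3: "{\<omega>\<in>space M. r1 Rc (Phi \<omega>) x powr aN > (1 / \<delta>) * (H\<^sup>2 + (norm x)\<^sup>2) powr (alpha_of aL aN (s \<omega> x) / 2)}
  = (SX x - Ev x (BT aL x)) \<union> ((space M - SX x) - Ev x (BT aN x))"
  unfolding SX_def Ev_def alpha_of_def not_le[symmetric] thrB by auto

lemma AT_nonneg: "0 \<le> AT a x" unfolding A_thr_def by simp
lemma BT_nonneg: "0 \<le> BT a x" unfolding B_thr_def by simp

lemma prob1: "norm x \<le> Rc \<Longrightarrow> prob {\<omega>\<in>space M. r1 Rc (Phi \<omega>) x powr aN \<le> \<delta> * (H\<^sup>2 + (norm x)\<^sup>2) powr (alpha_of aL aN (s \<omega> x) / 2)}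
  = P_L B C H (norm x) * F_r1 M Phi Rc (norm x) (AT aL x) + P_N B C H (norm x) * F_r1 M Phi Rc (norm x) (AT aN x)"
proof -
  assume nx: "norm x \<le> Rc"
  have "prob ((SX x \<inter> Ev x (AT aL x)) \<union> ((space M - SX x) \<inter> Ev x (AT aN x)))
     = prob (SX x \<inter> Ev x (AT aL x)) + prob ((space M - SX x) \<inter> Ev x (AT aN x))"
    using SX_sets[OF nx] Ev_sets[OF AT_nonneg[of aL x]] Ev_sets[OF AT_nonneg[of aN x]]
    by (intro finite_measure_Union) (auto intro: sets.Int sets.Diff)
  then show ?thesis unfolding ev1 using pS[OF nx AT_nonneg[of aL x]] pN[OF nx AT_nonneg[of aN x]] by simp
qed

lemma prob2: "norm x \<le> Rc \<Longrightarrow> prob {\<omega>\<in>space M. \<delta> * (H\<^sup>2 + (norm x)\<^sup>2) powr (alpha_of aL aN (s \<omega> x) / 2) < r1 Rc (Phi \<omega>) x powr aN \<and>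
        r1 Rc (Phi \<omega>) x powr aN \<le> (1 / \<delta>) * (H\<^sup>2 + (norm x)\<^sup>2) powr (alpha_of aL aN (s \<omega> x) / 2)}
  = P_L B C H (norm x) * (F_r1 M Phi Rc (norm x) (BT aL x) - F_r1 M Phi Rc (norm x) (AT aL x))
  + P_N B C H (norm x) * (F_r1 M Phi Rc (norm x) (BT aN x) - F_r1 M Phi Rc (norm x) (AT aN x))"
proof -
  assume nx: "norm x \<le> Rc"
  have sub: "Ev x (AT a x) \<subseteq> Ev x (BT a x)" for a
    by (rule Ev_mono) (rule thr_mono[OF d0 d1 aN])
  have d: "prob (S \<inter> (Ev x (BT a x) - Ev x (AT a x))) = prob (S \<inter> Ev x (BT a x)) - prob (S \<inter> Ev x (AT a x))"
    if S: "S \<in> events" for S a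
  proof -
    have "S \<inter> (Ev x (BT a x) - Ev x (AT a x)) = (S \<inter> Ev x (BT a x)) - (S \<inter> Ev x (AT a x))" by auto
    moreover have "S \<inter> Ev x (AT a x) \<subseteq> S \<inter> Ev x (BT a x)" using sub by auto
    moreover have "S \<inter> Ev x (BT a x) \<in> events" by (rule sets.Int[OF S Ev_sets[OF BT_nonneg[of a x]]])
    moreover have "S \<inter> Ev x (AT a x) \<in> events" by (rule sets.Int[OF S Ev_sets[OF AT_nonneg[of a x]]])
    ultimately show ?thesis by (simp add: finite_measure_Diff)
  qed
  have "prob ((SX x \<inter> (Ev x (BT aL x) - Ev x (AT aL x))) \<union> ((space M - SX x) \<inter> (Ev x (BT aN x) - Ev x (AT aN x))))
     = prob (SX x \<inter> (Ev x (BT aL x) - Ev x (AT aL x))) + prob ((space M - SX x) \<inter> (Ev x (BT aN x) - Ev x (AT aN x)))"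
    using SX_sets[OF nx] Ev_sets[OF AT_nonneg[of aL x]] Ev_sets[OF AT_nonneg[of aN x]]
      Ev_sets[OF BT_nonneg[of aL x]] Ev_sets[OF BT_nonneg[of aN x]]
    by (intro finite_measure_Union) (auto intro!: sets.Int sets.Diff)
  then show ?thesis unfolding ev2 using SX_sets[OF nx]
    pS[OF nx AT_nonneg[of aL x]] pN[OF nx AT_nonneg[of aN x]] pS[OF nx BT_nonneg[of aL x]] pN[OF nx BT_nonneg[of aN x]]
    by (simp add: d right_diff_distrib)
qed

lemma prob3: "norm x \<le> Rc \<Longrightarrow> prob {\<omega>\<in>space M. r1 Rc (Phi \<omega>) x powr aN > (1 / \<delta>) * (H\<^sup>2 + (norm x)\<^sup>2) powr (alpha_of aL aN (s \<omega> x) / 2)}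
  = P_L B C H (norm x) * (1 - F_r1 M Phi Rc (norm x) (BT aL x))
  + P_N B C H (norm x) * (1 - F_r1 M Phi Rc (norm x) (BT aN x))"
proof -
  assume nx: "norm x \<le> Rc"
  have "prob ((SX x - Ev x (BT aL x)) \<union> ((space M - SX x) - Ev x (BT aN x)))
     = prob (SX x - Ev x (BT aL x)) + prob ((space M - SX x) - Ev x (BT aN x))"
    using SX_sets[OF nx] Ev_sets[OF BT_nonneg[of aL x]] Ev_sets[OF BT_nonneg[of aN x]]
    by (intro finite_measure_Union) (auto intro!: sets.Int sets.Diff)
  moreover have "prob (SX x - Ev x (BT aL x)) = prob (SX x) - prob (SX x \<inter> Ev x (BT aL x))"
    using SX_sets[OF nx] Ev_sets[OF BT_nonneg[of aL x]] by (rule finite_measure_Diff')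
  moreover have "prob ((space M - SX x) - Ev x (BT aN x)) = prob (space M - SX x) - prob ((space M - SX x) \<inter> Ev x (BT aN x))"
    using SX_sets[OF nx] Ev_sets[OF BT_nonneg[of aN x]] by (intro finite_measure_Diff') auto
  moreover have "prob (space M - SX x) = P_N B C H (norm x)"
    using SX_prob[OF nx] SX_sets[OF nx] by (simp add: prob_compl P_N_def)
  ultimately show ?thesis unfolding ev3 using SX_prob[OF nx] pS[OF nx BT_nonneg[of aL x]] pN[OF nx BT_nonneg[of aN x]]
    by (simp add: right_diff_distrib)
qed

end



theorem proposition1:
  fixes M :: "'a measure" and Phi :: "'a \<Rightarrow> (real \<times> real) set"
    and s :: "'a \<Rightarrow> real \<times> real \<Rightarrow> bool"
    and lam Rc H aL aN B C \<delta> :: real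
  assumes "prob_space M"
    and "lam > 0" "Rc > 0" "H > 0" "aL > 0" "aN > 0" "B > 0" "C > 0"
    and "0 < \<delta>" "\<delta> \<le> 1"
    and "is_PPP M lam Phi"
    and "\<forall>x. norm x \<le> Rc \<longrightarrow> {\<omega>\<in>space M. s \<omega> x} \<in> sets M \<and>
            measure M {\<omega>\<in>space M. s \<omega> x} = P_L B C H (norm x)"
    and "\<forall>x. norm x \<le> Rc \<longrightarrow>
            prob_space.indep_set M (sigma_sets (space M) {{\<omega>\<in>space M. s \<omega> x}}) (PPP_sigma M Phi)"
  shows
   "(LINT x:{x. norm x \<le> Rc}|lborel. measure M {\<omega>\<in>space M.
        r1 Rc (Phi \<omega>) x powr aN \<le> \<delta> * (H\<^sup>2 + (norm x)\<^sup>2) powr (alpha_of aL aN (s \<omega> x) / 2)})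
      = 2 * pi * ((LINT r0:{0..Rc}|lborel. P_L B C H r0 * F_r1 M Phi Rc r0 (A_thr \<delta> H aL aN r0) * r0)
                + (LINT r0:{0..Rc}|lborel. P_N B C H r0 * F_r1 M Phi Rc r0 (A_thr \<delta> H aN aN r0) * r0)) \<and>
   (LINT x:{x. norm x \<le> Rc}|lborel. measure M {\<omega>\<in>space M.
        \<delta> * (H\<^sup>2 + (norm x)\<^sup>2) powr (alpha_of aL aN (s \<omega> x) / 2) < r1 Rc (Phi \<omega>) x powr aN \<and>
        r1 Rc (Phi \<omega>) x powr aN \<le> (1 / \<delta>) * (H\<^sup>2 + (norm x)\<^sup>2) powr (alpha_of aL aN (s \<omega> x) / 2)})
      = 2 * pi * ((LINT r0:{0..Rc}|lborel. P_L B C H r0 *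
                     (F_r1 M Phi Rc r0 (B_thr \<delta> H aL aN r0) - F_r1 M Phi Rc r0 (A_thr \<delta> H aL aN r0)) * r0)
                + (LINT r0:{0..Rc}|lborel. P_N B C H r0 *
                     (F_r1 M Phi Rc r0 (B_thr \<delta> H aN aN r0) - F_r1 M Phi Rc r0 (A_thr \<delta> H aN aN r0)) * r0)) \<and>
   (LINT x:{x. norm x \<le> Rc}|lborel. measure M {\<omega>\<in>space M.
        r1 Rc (Phi \<omega>) x powr aN > (1 / \<delta>) * (H\<^sup>2 + (norm x)\<^sup>2) powr (alpha_of aL aN (s \<omega> x) / 2)})
      = 2 * pi * ((LINT r0:{0..Rc}|lborel. P_L B C H r0 * (1 - F_r1 M Phi Rc r0 (B_thr \<delta> H aL aN r0)) * r0)
                + (LINT r0:{0..Rc}|lborel. P_N B C H r0 * (1 - F_r1 M Phi Rc r0 (B_thr \<delta> H aN aN r0)) * r0))"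
proof -
  interpret main_ctx M lam Rc Phi s H aL aN B C \<delta>
    by (rule main_ctx.intro[OF ppp_ctx.intro[OF assms(1) ppp_ctx_axioms.intro[OF assms(2,3,11)]]
          main_ctx_axioms.intro[OF assms(4,5,6,8,9,10,12,13)]])
  have Am[measurable]: "(\<lambda>r. A_thr \<delta> H a aN r) \<in> borel_measurable borel" for a
    unfolding A_thr_def by measurable
  have Bm[measurable]: "(\<lambda>r. B_thr \<delta> H a aN r) \<in> borel_measurable borel" for a
    unfolding B_thr_def by measurable
  have GA: "Gf lam Rc (\<lambda>r. A_thr \<delta> H a aN r) r = F_r1 M Phi Rc r (A_thr \<delta> H a aN r)" if "0 \<le> r" for a r
    unfolding Gf_def using F_eq'[OF that, of "A_thr \<delta> H a aN r"] by (simp add: A_thr_def)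
  have GB: "Gf lam Rc (\<lambda>r. B_thr \<delta> H a aN r) r = F_r1 M Phi Rc r (B_thr \<delta> H a aN r)" if "0 \<le> r" for a r
    unfolding Gf_def using F_eq'[OF that, of "B_thr \<delta> H a aN r"] by (simp add: B_thr_def)
  have gb: "0 \<le> Gf lam Rc a r \<and> Gf lam Rc a r \<le> 1" for a r using Gf_bounds[of lam Rc a r] lam by simp
  show ?thesis
  proof (intro conjI)
    show "(LINT x:{x. norm x \<le> Rc}|lborel. measure M {\<omega>\<in>space M.
        r1 Rc (Phi \<omega>) x powr aN \<le> \<delta> * (H\<^sup>2 + (norm x)\<^sup>2) powr (alpha_of aL aN (s \<omega> x) / 2)})
      = 2 * pi * ((LINT r0:{0..Rc}|lborel. P_L B C H r0 * F_r1 M Phi Rc r0 (A_thr \<delta> H aL aN r0) * r0)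
                + (LINT r0:{0..Rc}|lborel. P_N B C H r0 * F_r1 M Phi Rc r0 (A_thr \<delta> H aN aN r0) * r0))"
      apply (rule integral_combine[where ua="Gf lam Rc (\<lambda>r. A_thr \<delta> H aL aN r)"
                                      and ub="Gf lam Rc (\<lambda>r. A_thr \<delta> H aN aN r)", OF assms(8)])
      subgoal for x by (simp add: prob1 GA)
      subgoal by (rule Gf_meas[OF Am])
      subgoal by (rule Gf_meas[OF Am])
      subgoal for r using gb[of "A_thr \<delta> H aL aN" r] by (simp add: abs_le_iff)
      subgoal for r using gb[of "A_thr \<delta> H aN aN" r] by (simp add: abs_le_iff)
      subgoal for r by (simp add: GA)
      subgoal for r by (simp add: GA)
      done
  next
    show "(LINT x:{x. norm x \<le> Rc}|lborel. measure M {\<omega>\<in>space M.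
        \<delta> * (H\<^sup>2 + (norm x)\<^sup>2) powr (alpha_of aL aN (s \<omega> x) / 2) < r1 Rc (Phi \<omega>) x powr aN \<and>
        r1 Rc (Phi \<omega>) x powr aN \<le> (1 / \<delta>) * (H\<^sup>2 + (norm x)\<^sup>2) powr (alpha_of aL aN (s \<omega> x) / 2)})
      = 2 * pi * ((LINT r0:{0..Rc}|lborel. P_L B C H r0 *
                     (F_r1 M Phi Rc r0 (B_thr \<delta> H aL aN r0) - F_r1 M Phi Rc r0 (A_thr \<delta> H aL aN r0)) * r0)
                + (LINT r0:{0..Rc}|lborel. P_N B C H r0 *
                     (F_r1 M Phi Rc r0 (B_thr \<delta> H aN aN r0) - F_r1 M Phi Rc r0 (A_thr \<delta> H aN aN r0)) * r0))"
      apply (rule integral_combine[where ua="\<lambda>r. Gf lam Rc (\<lambda>r. B_thr \<delta> H aL aN r) r - Gf lam Rc (\<lambda>r. A_thr \<delta> H aL aN r) r"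
                                      and ub="\<lambda>r. Gf lam Rc (\<lambda>r. B_thr \<delta> H aN aN r) r - Gf lam Rc (\<lambda>r. A_thr \<delta> H aN aN r) r", OF assms(8)])
      subgoal for x using prob2[of x] by (simp add: GA GB)
      subgoal by (intro borel_measurable_diff Gf_meas[OF Am] Gf_meas[OF Bm])
      subgoal by (intro borel_measurable_diff Gf_meas[OF Am] Gf_meas[OF Bm])
      subgoal for r using gb[of "A_thr \<delta> H aL aN" r] gb[of "B_thr \<delta> H aL aN" r] by (simp add: abs_le_iff)
      subgoal for r using gb[of "A_thr \<delta> H aN aN" r] gb[of "B_thr \<delta> H aN aN" r] by (simp add: abs_le_iff)
      subgoal for r by (simp add: GA GB)
      subgoal for r by (simp add: GA GB)
      done
  next
    show "(LINT x:{x. norm x \<le> Rc}|lborel. measure M {\<omega>\<in>space M.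
        r1 Rc (Phi \<omega>) x powr aN > (1 / \<delta>) * (H\<^sup>2 + (norm x)\<^sup>2) powr (alpha_of aL aN (s \<omega> x) / 2)})
      = 2 * pi * ((LINT r0:{0..Rc}|lborel. P_L B C H r0 * (1 - F_r1 M Phi Rc r0 (B_thr \<delta> H aL aN r0)) * r0)
                + (LINT r0:{0..Rc}|lborel. P_N B C H r0 * (1 - F_r1 M Phi Rc r0 (B_thr \<delta> H aN aN r0)) * r0))"
      apply (rule integral_combine[where ua="\<lambda>r. 1 - Gf lam Rc (\<lambda>r. B_thr \<delta> H aL aN r) r"
                                      and ub="\<lambda>r. 1 - Gf lam Rc (\<lambda>r. B_thr \<delta> H aN aN r) r", OF assms(8)])
      subgoal for x using prob3[of x] by (simp add: GB)
      subgoal by (intro borel_measurable_diff borel_measurable_const Gf_meas[OF Bm])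
      subgoal by (intro borel_measurable_diff borel_measurable_const Gf_meas[OF Bm])
      subgoal for r using gb[of "B_thr \<delta> H aL aN" r] by (simp add: abs_le_iff)
      subgoal for r using gb[of "B_thr \<delta> H aN aN" r] by (simp add: abs_le_iff)
      subgoal for r by (simp add: GB)
      subgoal for r by (simp add: GB)
      done
  qed
qed


end
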